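(* Let $p$ be a prime and $m\ge 0$ an integer. Let $C_m=\{a\in\mathbb{Z}_p:\delta^m a=0\}$; the reduction map $C_m\to\mathbb{Z}_p/p^m\mathbb{Z}_p$ is a bijection, so for each $\alpha\in I=\{0,1,\dots,p^m-1\}$ there is a unique $a_\alpha\in C_m$ with $a_\alpha\equiv\alpha \pmod{p^m}$. Let $I'=\{\beta=(\beta_0,\dots,\beta_{m-1})\in\mathbb{Z}^m:0\le\beta_0,\dots,\beta_{m-1}\le p-1\}$ (a set with $p^m$ elements), fix any ordering of $I'$, and let $W=(w_{\alpha\beta})_{\alpha\in I,\beta\in I'}$ be the square matrix with entries $w_{\alpha\beta}=(a_\alpha)^{\beta_0}(\delta a_\alpha)^{\beta_1}\cdots(\delta^{m-1}a_\alpha)^{\beta_{m-1}}\in\mathbb{Z}_p$, with the convention $b^0=1$ for all $b\in\mathbb{Z}_p$. Then $\det W$ is a unit in $\mathbb{Z}_p$.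
   Context: $\mathbb{Z}_p$ is the ring of $p$-adic integers, $\delta:\mathbb{Z}_p\to\mathbb{Z}_p$ is the Fermat quotient operator $\delta a=(a-a^p)/p$, and $\delta^i$ is its $i$-th iterate. (Changing the ordering of $I'$ only changes $\det W$ by a sign.) *)

theory Defs
  imports "HOL-Number_Theory.Number_Theory"
          "Berlekamp_Zassenhaus.Finite_Field"
          "Jordan_Normal_Form.Determinant"
begin

text \<open>An element of Z_p is represented by its sequence of reductions x n in
  {0..<p^n} (the residue mod p^n), with x (Suc n) mod p^n = x n.
  The prime p is encoded as the cardinality of the finite type 'p.\<close>

typedef (overloaded) ('p::finite) padic =
  "{x :: nat \<Rightarrow> int. \<forall>n. 0 \<le> x n \<and> x n < int CARD('p) ^ n \<and> x (Suc n) mod int CARD('p) ^ n = x n}"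
  by (rule exI[of _ "\<lambda>_. 0"]) auto

setup_lifting type_definition_padic

lemma card_pos_int: "0 < int CARD('p::finite) ^ n"
  by simp

lemma padic_coh_op:
  fixes p :: int
  assumes "0 < p"
    and "a' mod p ^ n = a" and "b' mod p ^ n = b"
    and op: "\<And>u v u' v'. u mod p ^ n = u' mod p ^ n \<Longrightarrow> v mod p ^ n = v' mod p ^ n
                     \<Longrightarrow> f u v mod p ^ n = f u' v' mod p ^ n"
  shows "(f a' b' mod p ^ Suc n) mod p ^ n = f a b mod p ^ n"
proof -
  have "p ^ n dvd p ^ Suc n" by simp
  then have "(f a' b' mod p ^ Suc n) mod p ^ n = f a' b' mod p ^ n"
    by (rule mod_mod_cancel)
  also have "\<dots> = f a b mod p ^ n"
    by (rule op) (use assms in auto)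
  finally show ?thesis .
qed

instantiation padic :: (prime_card) comm_ring_1
begin

lift_definition zero_padic :: "'a padic" is "\<lambda>n. 0" by auto

lift_definition one_padic :: "'a padic" is "\<lambda>n. 1 mod int CARD('a) ^ n"
proof (intro allI conjI)
  fix n
  have p: "0 < int CARD('a) ^ n" by simp
  show "0 \<le> 1 mod int CARD('a) ^ n" using p by simp
  show "1 mod int CARD('a) ^ n < int CARD('a) ^ n" using p by simp
  have "int CARD('a) ^ n dvd int CARD('a) ^ Suc n" by simp
  then show "1 mod int CARD('a) ^ Suc n mod int CARD('a) ^ n = 1 mod int CARD('a) ^ n"
    by (rule mod_mod_cancel)
qed

lift_definition plus_padic :: "'a padic \<Rightarrow> 'a padic \<Rightarrow> 'a padic"
  is "\<lambda>x y n. (x n + y n) mod int CARD('a) ^ n"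
proof (intro allI conjI)
  fix x y :: "nat \<Rightarrow> int" and n
  assume x: "\<And>n. 0 \<le> x n \<and> x n < int CARD('a) ^ n \<and> x (Suc n) mod int CARD('a) ^ n = x n"
     and y: "\<And>n. 0 \<le> y n \<and> y n < int CARD('a) ^ n \<and> y (Suc n) mod int CARD('a) ^ n = y n"
  have p: "0 < int CARD('a) ^ n" by simp
  show "0 \<le> (x n + y n) mod int CARD('a) ^ n" using p by simp
  show "(x n + y n) mod int CARD('a) ^ n < int CARD('a) ^ n" using p by simp
  show "(x (Suc n) + y (Suc n)) mod int CARD('a) ^ Suc n mod int CARD('a) ^ n =
        (x n + y n) mod int CARD('a) ^ n"
    by (rule padic_coh_op[where f = "(+)"]) (use x y in \<open>auto intro: mod_add_cong\<close>)
qed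

lift_definition uminus_padic :: "'a padic \<Rightarrow> 'a padic"
  is "\<lambda>x n. (- x n) mod int CARD('a) ^ n"
proof (intro allI conjI)
  fix x :: "nat \<Rightarrow> int" and n
  assume x: "\<And>n. 0 \<le> x n \<and> x n < int CARD('a) ^ n \<and> x (Suc n) mod int CARD('a) ^ n = x n"
  have p: "0 < int CARD('a) ^ n" by simp
  show "0 \<le> (- x n) mod int CARD('a) ^ n" using p by simp
  show "(- x n) mod int CARD('a) ^ n < int CARD('a) ^ n" using p by simp
  show "(- x (Suc n)) mod int CARD('a) ^ Suc n mod int CARD('a) ^ n =
        (- x n) mod int CARD('a) ^ n"
  proof -
    have "int CARD('a) ^ n dvd int CARD('a) ^ Suc n" by simp
    then have "(- x (Suc n)) mod int CARD('a) ^ Suc n mod int CARD('a) ^ n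
               = (- x (Suc n)) mod int CARD('a) ^ n" by (rule mod_mod_cancel)
    also have "\<dots> = (- x n) mod int CARD('a) ^ n"
      using x[of n] by (metis mod_minus_eq)
    finally show ?thesis .
  qed
qed

lift_definition minus_padic :: "'a padic \<Rightarrow> 'a padic \<Rightarrow> 'a padic"
  is "\<lambda>x y n. (x n - y n) mod int CARD('a) ^ n"
proof (intro allI conjI)
  fix x y :: "nat \<Rightarrow> int" and n
  assume x: "\<And>n. 0 \<le> x n \<and> x n < int CARD('a) ^ n \<and> x (Suc n) mod int CARD('a) ^ n = x n"
     and y: "\<And>n. 0 \<le> y n \<and> y n < int CARD('a) ^ n \<and> y (Suc n) mod int CARD('a) ^ n = y n"
  have p: "0 < int CARD('a) ^ n" by simp
  show "0 \<le> (x n - y n) mod int CARD('a) ^ n" using p by simp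
  show "(x n - y n) mod int CARD('a) ^ n < int CARD('a) ^ n" using p by simp
  show "(x (Suc n) - y (Suc n)) mod int CARD('a) ^ Suc n mod int CARD('a) ^ n =
        (x n - y n) mod int CARD('a) ^ n"
    by (rule padic_coh_op[where f = "(-)"]) (use x y in \<open>auto intro: mod_diff_cong\<close>)
qed

lift_definition times_padic :: "'a padic \<Rightarrow> 'a padic \<Rightarrow> 'a padic"
  is "\<lambda>x y n. (x n * y n) mod int CARD('a) ^ n"
proof (intro allI conjI)
  fix x y :: "nat \<Rightarrow> int" and n
  assume x: "\<And>n. 0 \<le> x n \<and> x n < int CARD('a) ^ n \<and> x (Suc n) mod int CARD('a) ^ n = x n"
     and y: "\<And>n. 0 \<le> y n \<and> y n < int CARD('a) ^ n \<and> y (Suc n) mod int CARD('a) ^ n = y n"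
  have p: "0 < int CARD('a) ^ n" by simp
  show "0 \<le> (x n * y n) mod int CARD('a) ^ n" using p by simp
  show "(x n * y n) mod int CARD('a) ^ n < int CARD('a) ^ n" using p by simp
  show "(x (Suc n) * y (Suc n)) mod int CARD('a) ^ Suc n mod int CARD('a) ^ n =
        (x n * y n) mod int CARD('a) ^ n"
    by (rule padic_coh_op[where f = "(*)"]) (use x y in \<open>auto intro: mod_mult_cong\<close>)
qed

instance
proof
  fix a b c :: "'a padic"
  show "a * b * c = a * (b * c)"
    by transfer (simp add: mod_mult_left_eq mod_mult_right_eq mult.assoc)
  show "a * b = b * a" by transfer (simp add: mult.commute)
  show "1 * a = a"
    by transfer (simp add: mod_mult_left_eq fun_eq_iff mod_pos_pos_trivial)
  show "a + b + c = a + (b + c)"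
    by transfer (simp add: mod_add_left_eq mod_add_right_eq add.assoc)
  show "a + b = b + a" by transfer (simp add: add.commute)
  show "0 + a = a" by transfer (simp add: fun_eq_iff mod_pos_pos_trivial)
  show "- a + a = 0"
    by transfer (simp add: mod_add_left_eq)
  show "a - b = a + - b"
    by transfer (simp add: mod_add_right_eq)
  show "(a + b) * c = a * c + b * c"
    by transfer (simp add: mod_mult_left_eq mod_add_eq distrib_right)
  show "(0::'a padic) \<noteq> 1"
  proof transfer
    have "1 < int CARD('a)" using prime_card_int[where 'a='a] prime_gt_1_int by blast
    then show "(\<lambda>n. 0) \<noteq> (\<lambda>n. 1 mod int CARD('a) ^ n)"
      by (auto simp: fun_eq_iff intro!: exI[of _ 1])
  qed
qed

end

lemma prime_dvd_self_minus_pow: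
  fixes a :: int
  assumes "prime (int p)" "0 \<le> a"
  shows "int p dvd a - a ^ p"
proof -
  obtain k where k: "a = int k" using assms(2) nonneg_eq_int by blast
  have pp: "prime p" using assms(1) by simp
  have p0: "0 < p" using pp prime_gt_0_nat by blast
  have kp: "k ^ p = k * k ^ (p - 1)"
    using p0 by (cases p) simp_all
  have "[k ^ p = k] (mod p)"
  proof (cases "p dvd k")
    case True
    have "k dvd k ^ p" using kp by simp
    then have "p dvd k ^ p" using True by (rule dvd_trans[rotated])
    then show ?thesis using True by (simp add: cong_def dvd_eq_mod_eq_0)
  next
    case False
    then have "[k ^ (p - 1) = 1] (mod p)" using fermat_theorem pp by blast
    then have "[k * k ^ (p - 1) = k * 1] (mod p)" by (rule cong_scalar_left)
    then show ?thesis using kp by simp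
  qed
  then have "[int k ^ p = int k] (mod int p)"
    by (simp add: cong_int_iff[symmetric])
  then have "int p dvd int k - int k ^ p"
    by (simp add: cong_iff_dvd_diff dvd_diff_commute)
  then show ?thesis using k by simp
qed

text \<open>(a - a^p)/p: its reduction mod p^n is obtained from the reduction mod p^(n+1)
  of a - a^p (which is divisible by p) by dividing by p.\<close>

lift_definition delta :: "'p::prime_card padic \<Rightarrow> 'p padic"
  is "\<lambda>a n. ((a (Suc n) - a (Suc n) ^ CARD('p)) mod int CARD('p) ^ Suc n) div int CARD('p)"
proof (intro allI conjI)
  fix a :: "nat \<Rightarrow> int" and n
  assume a: "\<And>n. 0 \<le> a n \<and> a n < int CARD('p) ^ n \<and> a (Suc n) mod int CARD('p) ^ n = a n"
  define p where "p = int CARD('p)"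
  have p1: "1 < p" unfolding p_def using prime_card_int[where 'a='p] prime_gt_1_int by blast
  define y where "y = (\<lambda>k. (a k - a k ^ CARD('p)) mod p ^ k)"
  have ydvd: "p dvd y (Suc k)" for k
  proof -
    have "p dvd a (Suc k) - a (Suc k) ^ CARD('p)"
      unfolding p_def by (rule prime_dvd_self_minus_pow) (use a prime_card_int[where 'a='p] in auto)
    moreover have "p dvd p ^ Suc k" by simp
    ultimately show ?thesis unfolding y_def by (simp add: dvd_mod)
  qed
  have y0: "0 \<le> y k" "y k < p ^ k" for k unfolding y_def using p1 by auto
  have "0 \<le> y (Suc n) div p" using y0(1)[of "Suc n"] p1 by (simp add: pos_imp_zdiv_nonneg_iff)
  then show "0 \<le> (a (Suc n) - a (Suc n) ^ CARD('p)) mod int CARD('p) ^ Suc n div int CARD('p)"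
    unfolding y_def p_def .
  have "y (Suc n) div p < p ^ n"
  proof -
    obtain q where q: "y (Suc n) = p * q" using ydvd by blast
    have "p * q < p * p ^ n" using y0(2)[of "Suc n"] q by simp
    then have "q < p ^ n" using p1 mult_less_cancel_left_pos[of p q "p ^ n"] by simp
    then show ?thesis using q p1 by simp
  qed
  then show "(a (Suc n) - a (Suc n) ^ CARD('p)) mod int CARD('p) ^ Suc n div int CARD('p)
             < int CARD('p) ^ n" unfolding y_def p_def .
  have coh: "y (Suc (Suc n)) mod p ^ Suc n = y (Suc n)"
  proof -
    have "p ^ Suc n dvd p ^ Suc (Suc n)" by (simp add: le_imp_power_dvd)
    then have "y (Suc (Suc n)) mod p ^ Suc n
        = (a (Suc (Suc n)) - a (Suc (Suc n)) ^ CARD('p)) mod p ^ Suc n"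
      unfolding y_def by (rule mod_mod_cancel)
    also have "\<dots> = y (Suc n)"
    proof -
      have e1: "a (Suc (Suc n)) mod p ^ Suc n = a (Suc n) mod p ^ Suc n"
        using a[of "Suc n"] a[of "Suc n"] by (simp add: p_def mod_pos_pos_trivial)
      then have e2: "a (Suc (Suc n)) ^ CARD('p) mod p ^ Suc n = a (Suc n) ^ CARD('p) mod p ^ Suc n"
        by (metis power_mod)
      show ?thesis unfolding y_def by (rule mod_diff_cong[OF e1 e2])
    qed
    finally show ?thesis .
  qed
  obtain q where q: "y (Suc (Suc n)) = p * q" using ydvd by blast
  obtain r where r: "y (Suc n) = p * r" using ydvd by blast
  have "p * q mod (p * p ^ n) = p * (q mod p ^ n)" by (rule mod_mult_mult1)
  then have "p * (q mod p ^ n) = p * r"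
    using coh q r by simp
  then have "q mod p ^ n = r" using p1 by simp
  then have "(y (Suc (Suc n)) div p) mod p ^ n = y (Suc n) div p"
    using q r p1 by simp
  then show "(a (Suc (Suc n)) - a (Suc (Suc n)) ^ CARD('p)) mod int CARD('p) ^ Suc (Suc n)
              div int CARD('p) mod int CARD('p) ^ n =
             (a (Suc n) - a (Suc n) ^ CARD('p)) mod int CARD('p) ^ Suc n div int CARD('p)"
    unfolding y_def p_def .
qed

end

theory Submission
  imports Defs
begin


lemma Rep_bnd:
  fixes x :: "'p::prime_card padic"
  shows "0 \<le> Rep_padic x n" "Rep_padic x n < int CARD('p) ^ n"
  using Rep_padic[of x] by auto

lemma Rep_coh1:
  fixes x :: "'p::prime_card padic"
  shows "Rep_padic x (Suc n) mod int CARD('p) ^ n = Rep_padic x n"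
  using Rep_padic[of x] by auto

lemma Rep_mod:
  fixes x :: "'p::prime_card padic"
  assumes "k \<le> n"
  shows "Rep_padic x n mod int CARD('p) ^ k = Rep_padic x k"
  using assms
proof (induction n rule: dec_induct)
  case base
  then show ?case using Rep_bnd[of x k] by simp
next
  case (step n)
  have "int CARD('p) ^ k dvd int CARD('p) ^ n" using \<open>k \<le> n\<close> by (simp add: le_imp_power_dvd)
  then have "Rep_padic x (Suc n) mod int CARD('p) ^ k = Rep_padic x (Suc n) mod int CARD('p) ^ n mod int CARD('p) ^ k"
    by (simp add: mod_mod_cancel)
  then show ?case using step Rep_coh1[of x n] by simp
qed

lemma padic_eqI:
  fixes x :: "'p::prime_card padic"
  shows "(\<And>n. Rep_padic x n = Rep_padic y n) \<Longrightarrow> x = y"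
  using Rep_padic_inject by (metis ext)

lemma Rep_of_nat:
  "Rep_padic (of_nat k :: 'p::prime_card padic) n = int k mod int CARD('p) ^ n"
proof (induction k)
  case 0
  then show ?case by (simp add: zero_padic.rep_eq)
next
  case (Suc k)
  have "(of_nat (Suc k) :: 'p padic) = 1 + of_nat k" by simp
  then show ?case using Suc by (simp add: plus_padic.rep_eq one_padic.rep_eq mod_simps add.commute)
qed

lemma cong_Rep:
  fixes b :: "'p::prime_card padic"
  assumes "\<alpha> < CARD('p) ^ m" "b - of_nat \<alpha> = of_nat (CARD('p) ^ m) * c"
  shows "Rep_padic b m = int \<alpha>"
proof -
  let ?P = "int CARD('p)"
  have "Rep_padic (b - of_nat \<alpha>) m = Rep_padic (of_nat (CARD('p) ^ m) * c) m"
    using assms(2) by simp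
  moreover have "Rep_padic (of_nat (CARD('p) ^ m) * c) m = 0"
    unfolding times_padic.rep_eq Rep_of_nat by (simp add: mod_simps)
  ultimately have "(Rep_padic b m - int \<alpha> mod ?P ^ m) mod ?P ^ m = 0"
    by (simp add: minus_padic.rep_eq Rep_of_nat)
  then have "(Rep_padic b m - int \<alpha>) mod ?P ^ m = 0" by (simp add: mod_diff_right_eq)
  moreover have "int \<alpha> < ?P ^ m" using assms(1) by (metis of_nat_less_iff of_nat_power)
  ultimately show ?thesis using Rep_bnd[of b m]
    by (metis mod_eq_0_iff_dvd mod_pos_pos_trivial mod_0 mod_diff_eq eq_iff_diff_eq_0 of_nat_0_le_iff dvd_mod_iff mod_eq_dvd_iff)
qed



lemma pow_diff_dvd:
  fixes X Y P :: int
  assumes "P ^ n dvd X - Y" "P dvd X - Y" and that: "P dvd int q"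
  shows "P ^ Suc n dvd X ^ q - Y ^ q"
proof -
  have fac: "X ^ q - Y ^ q = (X - Y) * (\<Sum>i<q. Y ^ (q - Suc i) * X ^ i)"
    by (rule power_diff_sumr2)
  have c: "[(\<Sum>i<q. Y ^ (q - Suc i) * X ^ i) = (\<Sum>i<q. Y ^ (q - Suc i) * Y ^ i)] (mod P)"
  proof (rule cong_sum)
    fix i assume "i \<in> {..<q}"
    have "[X = Y] (mod P)" using assms(2) by (simp add: cong_iff_dvd_diff)
    then have "[X ^ i = Y ^ i] (mod P)" by (rule cong_pow)
    then show "[Y ^ (q - Suc i) * X ^ i = Y ^ (q - Suc i) * Y ^ i] (mod P)"
      by (rule cong_scalar_left)
  qed
  have s: "(\<Sum>i<q. Y ^ (q - Suc i) * Y ^ i) = int q * Y ^ (q - 1)"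
  proof -
    have "\<And>i. i \<in> {..<q} \<Longrightarrow> Y ^ (q - Suc i) * Y ^ i = Y ^ (q - 1)"
    proof -
      fix i assume "i \<in> {..<q}"
      then have "q - Suc i + i = q - 1" by auto
      then show "Y ^ (q - Suc i) * Y ^ i = Y ^ (q - 1)" by (metis power_add)
    qed
    then show ?thesis by simp
  qed
  have "P dvd int q * Y ^ (q - 1)" using that by simp
  then have "P dvd (\<Sum>i<q. Y ^ (q - Suc i) * X ^ i)"
    using cong_dvd_iff[OF c] s by simp
  then have "P ^ n * P dvd (X - Y) * (\<Sum>i<q. Y ^ (q - Suc i) * X ^ i)"
    using assms(1) by (intro mult_dvd_mono)
  then show ?thesis using fac by (simp add: mult.commute)
qed


lemma delta_inj:
  fixes x y :: "'p::prime_card padic"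
  assumes "\<And>i. i < n \<Longrightarrow> Rep_padic ((delta ^^ i) x) 1 = Rep_padic ((delta ^^ i) y) 1"
  shows "Rep_padic x n = Rep_padic y n"
  using assms
proof (induction n arbitrary: x y)
  case 0
  then show ?case using Rep_bnd[of x 0] Rep_bnd[of y 0] by simp
next
  case (Suc n)
  let ?P = "int CARD('p)"
  define X where "X = Rep_padic x (Suc n)"
  define Y where "Y = Rep_padic y (Suc n)"
  have h1: "Rep_padic x n = Rep_padic y n" by (rule Suc.IH) (rule Suc.prems, simp)
  have fs: "(delta ^^ i) (delta z) = (delta ^^ Suc i) z" for i and z :: "'p padic"
    unfolding funpow_Suc_right by simp
  have h2: "Rep_padic (delta x) n = Rep_padic (delta y) n"
  proof (rule Suc.IH)
    fix i assume "i < n"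
    then show "Rep_padic ((delta ^^ i) (delta x)) 1 = Rep_padic ((delta ^^ i) (delta y)) 1"
      unfolding fs using Suc.prems[of "Suc i"] \<open>i < n\<close> by simp
  qed
  have h3: "Rep_padic x 1 = Rep_padic y 1" using Suc.prems[of 0] by simp
  have "X mod ?P ^ n = Y mod ?P ^ n"
    using h1 Rep_mod[of n "Suc n" x] Rep_mod[of n "Suc n" y] unfolding X_def Y_def by simp
  then have dn: "?P ^ n dvd X - Y" by (simp add: mod_eq_dvd_iff)
  have "X mod ?P ^ 1 = Y mod ?P ^ 1"
    using h3 Rep_mod[of 1 "Suc n" x] Rep_mod[of 1 "Suc n" y] unfolding X_def Y_def by simp
  then have d1: "?P dvd X - Y" by (simp add: mod_eq_dvd_iff)
  have dp: "?P ^ Suc n dvd X ^ CARD('p) - Y ^ CARD('p)"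
    by (rule pow_diff_dvd[OF dn d1]) simp
  have e: "((X - X ^ CARD('p)) mod ?P ^ Suc n) div ?P = ((Y - Y ^ CARD('p)) mod ?P ^ Suc n) div ?P"
    using h2 unfolding delta.rep_eq X_def Y_def by simp
  have pr: "prime (int CARD('p))" by (rule prime_card_int)
  have dX: "?P dvd (X - X ^ CARD('p)) mod ?P ^ Suc n"
  proof -
    have "?P dvd X - X ^ CARD('p)"
      using prime_dvd_self_minus_pow[OF pr, of X] Rep_bnd[of x "Suc n"] unfolding X_def by simp
    moreover have "?P dvd ?P ^ Suc n" by simp
    ultimately show ?thesis by (simp add: dvd_mod)
  qed
  have dY: "?P dvd (Y - Y ^ CARD('p)) mod ?P ^ Suc n"
  proof -
    have "?P dvd Y - Y ^ CARD('p)"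
      using prime_dvd_self_minus_pow[OF pr, of Y] Rep_bnd[of y "Suc n"] unfolding Y_def by simp
    moreover have "?P dvd ?P ^ Suc n" by simp
    ultimately show ?thesis by (simp add: dvd_mod)
  qed
  have "(X - X ^ CARD('p)) mod ?P ^ Suc n = ((X - X ^ CARD('p)) mod ?P ^ Suc n) div ?P * ?P"
    using dX by simp
  also have "\<dots> = ((Y - Y ^ CARD('p)) mod ?P ^ Suc n) div ?P * ?P" using e by simp
  also have "\<dots> = (Y - Y ^ CARD('p)) mod ?P ^ Suc n" using dY by simp
  finally have "?P ^ Suc n dvd (X - X ^ CARD('p)) - (Y - Y ^ CARD('p))"
    by (simp add: mod_eq_dvd_iff)
  from dvd_add[OF this dp] have "?P ^ Suc n dvd X - Y" by (simp add: algebra_simps)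
  then have "X mod ?P ^ Suc n = Y mod ?P ^ Suc n" by (simp add: mod_eq_dvd_iff)
  then show ?case using Rep_bnd[of x "Suc n"] Rep_bnd[of y "Suc n"] unfolding X_def Y_def
    by simp
qed


lemma univ_zero:
  fixes c :: "nat \<Rightarrow> 'p::prime_card mod_ring"
  assumes "\<And>t. (\<Sum>k<CARD('p). c k * t ^ k) = 0"
  shows "\<forall>k<CARD('p). c k = 0"
proof -
  define Q where "Q = (\<Sum>k<CARD('p). monom (c k) k)"
  have pQ: "poly Q t = (\<Sum>k<CARD('p). c k * t ^ k)" for t
    unfolding Q_def poly_sum by (simp add: poly_monom)
  have cQ: "coeff Q n = (if n < CARD('p) then c n else 0)" for n
    unfolding Q_def coeff_sum by (simp add: coeff_monom)
  have p1: "1 < CARD('p)" using prime_card[where 'a='p] prime_gt_1_nat by blast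
  have dQ: "degree Q < CARD('p)"
  proof -
    have "degree Q \<le> CARD('p) - 1"
      by (rule degree_le) (use p1 in \<open>auto simp: cQ\<close>)
    then show ?thesis using p1 by linarith
  qed
  have "Q = 0"
  proof (rule poly_eqI_degree[of UNIV])
    show "\<And>x. x \<in> UNIV \<Longrightarrow> poly Q x = poly 0 x" using pQ assms by simp
    show "degree Q < card (UNIV :: 'p mod_ring set)" using dQ by simp
    show "degree (0 :: 'p mod_ring poly) < card (UNIV :: 'p mod_ring set)" using p1 by simp
  qed
  then show ?thesis using cQ by (metis coeff_0)
qed

lemma sum_split_p:
  fixes g :: "nat \<Rightarrow> 'a::comm_monoid_add"
  shows "(\<Sum>j< N * q. g j) = (\<Sum>k<q. \<Sum>l<N. g (l * q + k))"
proof -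
  have "(\<Sum>j< N * q. g j) = (\<Sum>l<N. \<Sum>j\<in>{l * q ..< l * q + q}. g j)"
    by (rule sum.nat_group[symmetric])
  also have "\<dots> = (\<Sum>l<N. \<Sum>k<q. g (l * q + k))"
  proof (rule sum.cong[OF refl])
    fix l
    show "(\<Sum>j\<in>{l * q ..< l * q + q}. g j) = (\<Sum>k<q. g (l * q + k))"
      using sum.shift_bounds_nat_ivl[where g=g and m=0 and k="l*q" and n=q]
      by (simp add: atLeast0LessThan add.commute)
  qed
  also have "\<dots> = (\<Sum>k<q. \<Sum>l<N. g (l * q + k))" by (rule sum.swap)
  finally show ?thesis .
qed

lemma digit_shift:
  fixes q l k i :: nat
  assumes "k < q"
  shows "(l * q + k) div q ^ Suc i mod q = l div q ^ i mod q"
    and "(l * q + k) div q ^ 0 mod q = k"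
proof -
  have "(l * q + k) div q = l" using assms by simp
  then show "(l * q + k) div q ^ Suc i mod q = l div q ^ i mod q"
    by (simp add: div_mult2_eq power_Suc)
  show "(l * q + k) div q ^ 0 mod q = k" using assms by simp
qed

lemma multi_zero:
  fixes c :: "nat \<Rightarrow> 'p::prime_card mod_ring"
  assumes "\<And>y. (\<Sum>j<CARD('p) ^ m. c j * (\<Prod>i<m. y i ^ (j div CARD('p) ^ i mod CARD('p)))) = 0"
  shows "\<forall>j<CARD('p) ^ m. c j = 0"
  using assms
proof (induction m arbitrary: c)
  case 0
  then show ?case by simp
next
  case (Suc m)
  let ?p = "CARD('p)"
  have "\<forall>l<?p ^ m. c (l * ?p + k) = 0" if k: "k < ?p" for k
  proof (rule Suc.IH)
    fix z :: "nat \<Rightarrow> 'p mod_ring"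
    define T where "T = (\<lambda>k. \<Sum>l<?p ^ m. c (l * ?p + k) * (\<Prod>i<m. z i ^ (l div ?p ^ i mod ?p)))"
    have "\<forall>k<?p. T k = 0"
    proof (rule univ_zero)
      fix t
      define y where "y = case_nat t z"
      have "0 = (\<Sum>j<?p ^ Suc m. c j * (\<Prod>i<Suc m. y i ^ (j div ?p ^ i mod ?p)))"
        using Suc.prems[of y] by simp
      also have "\<dots> = (\<Sum>k<?p. \<Sum>l<?p ^ m. c (l * ?p + k) *
                 (\<Prod>i<Suc m. y i ^ ((l * ?p + k) div ?p ^ i mod ?p)))"
        unfolding power_Suc2 by (rule sum_split_p)
      also have "\<dots> = (\<Sum>k<?p. T k * t ^ k)"
      proof (rule sum.cong[OF refl])
        fix k assume "k \<in> {..<?p}"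
        then have k: "k < ?p" by simp
        have "(\<Prod>i<Suc m. y i ^ ((l * ?p + k) div ?p ^ i mod ?p)) =
              t ^ k * (\<Prod>i<m. z i ^ (l div ?p ^ i mod ?p))" for l
          unfolding prod.lessThan_Suc_shift using digit_shift[OF k, of l] by (simp add: y_def)
        then show "(\<Sum>l<?p ^ m. c (l * ?p + k) * (\<Prod>i<Suc m. y i ^ ((l * ?p + k) div ?p ^ i mod ?p)))
              = T k * t ^ k"
          unfolding T_def sum_distrib_right by (simp add: ac_simps)
      qed
      finally show "(\<Sum>k<?p. T k * t ^ k) = 0" by simp
    qed
    then show "(\<Sum>l<?p ^ m. c (l * ?p + k) * (\<Prod>i<m. z i ^ (l div ?p ^ i mod ?p))) = 0"
      using k unfolding T_def by simp
  qed
  then show ?case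
  proof (intro allI impI)
    fix j assume j: "j < ?p ^ Suc m"
    assume H: "\<And>k. k < ?p \<Longrightarrow> \<forall>l<?p ^ m. c (l * ?p + k) = 0"
    have p0: "0 < ?p" by simp
    have "j div ?p < ?p ^ m" using j by (simp add: div_less_iff_less_mult mult.commute)
    then have "c (j div ?p * ?p + j mod ?p) = 0" using H[of "j mod ?p"] p0 mod_less_divisor by blast
    then show "c j = 0" by (metis div_mult_mod_eq)
  qed
qed



lemma inv_unique:
  fixes a z z' M :: int
  assumes "0 \<le> z" "z < M" "0 \<le> z'" "z' < M" "[a * z = 1] (mod M)" "[a * z' = 1] (mod M)"
  shows "z = z'"
proof -
  have "[z * (a * z') = z * 1] (mod M)" using assms(6) by (rule cong_scalar_left)
  moreover have "[(a * z) * z' = 1 * z'] (mod M)" using assms(5) by (rule cong_scalar_right)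
  ultimately have "[z = z'] (mod M)"
    by (metis (no_types, lifting) cong_sym cong_trans mult.assoc mult.commute mult_1_right mult_1)
  then show ?thesis using assms(1-4) unfolding cong_def by simp
qed

lemma padic_unit:
  fixes x :: "'p::prime_card padic"
  assumes nd: "\<not> int CARD('p) dvd Rep_padic x 1"
  shows "x dvd 1"
proof -
  let ?P = "int CARD('p)"
  have pr: "prime ?P" by (rule prime_card_int)
  have cop: "coprime (Rep_padic x n) (?P ^ n)" for n
  proof (cases n)
    case 0 then show ?thesis by simp
  next
    case (Suc k)
    have "\<not> ?P dvd Rep_padic x n"
    proof
      assume "?P dvd Rep_padic x n"
      then have "?P dvd Rep_padic x n mod ?P ^ 1" by (simp add: dvd_mod)
      then show False using Rep_mod[of 1 n x] nd Suc by simp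
    qed
    then have "coprime ?P (Rep_padic x n)" using pr by (rule prime_imp_coprime[rotated])
    then show ?thesis by (simp add: coprime_commute)
  qed
  define S where "S = (\<lambda>n z. 0 \<le> z \<and> z < ?P ^ n \<and> [Rep_padic x n * z = 1] (mod ?P ^ n))"
  have ex: "\<exists>z. S n z" for n
  proof -
    obtain z where z: "[Rep_padic x n * z = 1] (mod ?P ^ n)" using cong_solve_coprime_int[OF cop[of n]] by blast
    have "[Rep_padic x n * (z mod ?P ^ n) = Rep_padic x n * z] (mod ?P ^ n)"
      by (intro cong_scalar_left) (simp add: cong_def)
    then have "[Rep_padic x n * (z mod ?P ^ n) = 1] (mod ?P ^ n)" using z by (rule cong_trans)
    then show ?thesis unfolding S_def by (intro exI[of _ "z mod ?P ^ n"]) simp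
  qed
  define y where "y = (\<lambda>n. SOME z. S n z)"
  have yS: "S n (y n)" for n unfolding y_def using ex[of n] by (rule someI_ex)
  have ycoh: "y (Suc n) mod ?P ^ n = y n" for n
  proof -
    have h: "[Rep_padic x (Suc n) * y (Suc n) = 1] (mod ?P ^ Suc n)" using yS[of "Suc n"] unfolding S_def by simp
    have "[Rep_padic x (Suc n) * y (Suc n) = 1] (mod ?P ^ n)"
      by (rule cong_dvd_modulus[OF h]) (simp add: le_imp_power_dvd)
    moreover have "[Rep_padic x n * (y (Suc n) mod ?P ^ n) = Rep_padic x (Suc n) * y (Suc n)] (mod ?P ^ n)"
      using Rep_coh1[of x n] unfolding cong_def by (metis mod_mult_eq)
    ultimately have "[Rep_padic x n * (y (Suc n) mod ?P ^ n) = 1] (mod ?P ^ n)"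
      by (metis cong_trans)
    then show ?thesis using yS[of n] unfolding S_def
      by (intro inv_unique[of _ "?P ^ n" _ "Rep_padic x n"]) auto
  qed
  have ymem: "y \<in> {x :: nat \<Rightarrow> int. \<forall>n. 0 \<le> x n \<and> x n < int CARD('p) ^ n \<and> x (Suc n) mod int CARD('p) ^ n = x n}"
    using yS ycoh unfolding S_def by auto
  define yy :: "'p padic" where "yy = Abs_padic y"
  have Ry: "Rep_padic yy = y" unfolding yy_def using ymem by (rule Abs_padic_inverse)
  have "x * yy = 1"
  proof (rule padic_eqI)
    fix n
    show "Rep_padic (x * yy) n = Rep_padic (1::'p padic) n"
      using yS[of n] unfolding times_padic.rep_eq one_padic.rep_eq Ry S_def cong_def by simp
  qed
  then show ?thesis by (metis dvdI)
qed

definition red :: "'p::prime_card padic \<Rightarrow> 'p mod_ring" where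
  "red x = of_int_mod_ring (Rep_padic x 1)"

lemma of_int_mod_ring_add: "of_int_mod_ring ((a + b) mod int CARD('p)) = (of_int_mod_ring a + of_int_mod_ring b :: 'p::finite mod_ring)"
  by transfer (simp add: mod_simps)

lemma of_int_mod_ring_mult: "of_int_mod_ring ((a * b) mod int CARD('p)) = (of_int_mod_ring a * of_int_mod_ring b :: 'p::finite mod_ring)"
  by transfer (simp add: mod_simps)

lemma red_hom: "comm_ring_hom (red :: 'p::prime_card padic \<Rightarrow> 'p mod_ring)"
proof
  fix x y :: "'p padic"
  show "red (x + y) = red x + red y"
    unfolding red_def plus_padic.rep_eq using of_int_mod_ring_add by simp
  show "red (x * y) = red x * red y"
    unfolding red_def times_padic.rep_eq using of_int_mod_ring_mult by simp
  show "red (1 :: 'p padic) = 1"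
    unfolding red_def one_padic.rep_eq by transfer simp
  show "red (0 :: 'p padic) = 0"
    unfolding red_def zero_padic.rep_eq by transfer simp
qed

lemma red_inj: "red (x :: 'p::prime_card padic) = red y \<Longrightarrow> Rep_padic x 1 = Rep_padic y 1"
  unfolding red_def using Rep_bnd[of x 1] Rep_bnd[of y 1]
  by (metis power_one_right to_int_mod_ring_of_int_mod_ring)

lemma red_nz: "red (x :: 'p::prime_card padic) \<noteq> 0 \<Longrightarrow> \<not> int CARD('p) dvd Rep_padic x 1"
proof
  assume a: "red x \<noteq> 0" "int CARD('p) dvd Rep_padic x 1"
  have "Rep_padic x 1 = 0" using a(2) Rep_bnd[of x 1]
    by (metis power_one_right mod_pos_pos_trivial dvd_imp_mod_0)
  then show False using a(1) unfolding red_def by transfer simp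
qed



lemma det_nz:
  fixes v :: "nat \<Rightarrow> nat \<Rightarrow> 'p::prime_card mod_ring"
  assumes surj: "\<And>y. \<exists>\<alpha><CARD('p) ^ m. \<forall>i<m. v \<alpha> i = y i"
  shows "det (mat (CARD('p) ^ m) (CARD('p) ^ m)
           (\<lambda>(\<alpha>, j). \<Prod>i<m. v \<alpha> i ^ (j div CARD('p) ^ i mod CARD('p)))) \<noteq> 0"
    (is "det ?M \<noteq> 0")
proof
  let ?N = "CARD('p) ^ m"
  assume "det ?M = 0"
  then obtain w where w: "w \<in> carrier_vec ?N" "w \<noteq> 0\<^sub>v ?N" "?M *\<^sub>v w = 0\<^sub>v ?N"
    using det_0_iff_vec_prod_zero_field[of ?M ?N] by auto
  have dw: "dim_vec w = ?N" using w(1) by simp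
  have "\<forall>j<?N. w $ j = 0"
  proof (rule multi_zero)
    fix y :: "nat \<Rightarrow> 'p mod_ring"
    obtain \<alpha> where a: "\<alpha> < ?N" "\<forall>i<m. v \<alpha> i = y i" using surj by blast
    have "0 = (?M *\<^sub>v w) $ \<alpha>" using w(3) a(1) by simp
    also have "\<dots> = (\<Sum>j\<in>{0..<?N}. (\<Prod>i<m. v \<alpha> i ^ (j div CARD('p) ^ i mod CARD('p))) * w $ j)"
      using a(1) by (simp add: scalar_prod_def dw)
    also have "\<dots> = (\<Sum>j<?N. w $ j * (\<Prod>i<m. y i ^ (j div CARD('p) ^ i mod CARD('p))))"
      unfolding atLeast0LessThan using a(2) by (intro sum.cong refl) (simp add: mult.commute)
    finally show "(\<Sum>j<?N. w $ j * (\<Prod>i<m. y i ^ (j div CARD('p) ^ i mod CARD('p)))) = 0" by simp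
  qed
  then have "w = 0\<^sub>v ?N" using dw by (intro eq_vecI) auto
  then show False using w(2) by simp
qed

theorem lemma4p2:
  fixes m :: nat
    and a :: "nat \<Rightarrow> 'p::prime_card padic"
  assumes C: "\<And>\<alpha>. \<alpha> < CARD('p) ^ m \<Longrightarrow> (delta ^^ m) (a \<alpha>) = 0"
      and cong: "\<And>\<alpha>. \<alpha> < CARD('p) ^ m \<Longrightarrow>
                    \<exists>c. a \<alpha> - of_nat \<alpha> = of_nat (CARD('p) ^ m) * c"
  shows "det (mat (CARD('p) ^ m) (CARD('p) ^ m)
           (\<lambda>(\<alpha>, j). \<Prod>i<m. ((delta ^^ i) (a \<alpha>)) ^ (j div CARD('p) ^ i mod CARD('p)))) dvd 1"
proof -
  let ?N = "CARD('p) ^ m"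
  let ?W = "mat ?N ?N (\<lambda>(\<alpha>, j). \<Prod>i<m. ((delta ^^ i) (a \<alpha>)) ^ (j div CARD('p) ^ i mod CARD('p)))"
  interpret r: comm_ring_hom "red :: 'p padic \<Rightarrow> 'p mod_ring" by (rule red_hom)
  define v where "v = (\<lambda>\<alpha> i. red ((delta ^^ i) (a \<alpha>)))"
  define \<phi> where "\<phi> = (\<lambda>\<alpha>. restrict (v \<alpha>) {..<m})"
  have inj: "inj_on \<phi> {..<?N}"
  proof (rule inj_onI)
    fix \<alpha> \<beta> assume ab: "\<alpha> \<in> {..<?N}" "\<beta> \<in> {..<?N}" "\<phi> \<alpha> = \<phi> \<beta>"
    have "Rep_padic ((delta ^^ i) (a \<alpha>)) 1 = Rep_padic ((delta ^^ i) (a \<beta>)) 1" if "i < m" for i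
    proof -
      have "\<phi> \<alpha> i = \<phi> \<beta> i" using ab(3) by simp
      then have "v \<alpha> i = v \<beta> i" using that unfolding \<phi>_def by simp
      then show ?thesis unfolding v_def by (rule red_inj)
    qed
    then have "Rep_padic (a \<alpha>) m = Rep_padic (a \<beta>) m" by (rule delta_inj)
    moreover obtain c where "a \<alpha> - of_nat \<alpha> = of_nat ?N * c" using cong ab(1) by blast
    moreover obtain d where "a \<beta> - of_nat \<beta> = of_nat ?N * d" using cong ab(2) by blast
    ultimately show "\<alpha> = \<beta>" using cong_Rep ab(1,2) by (metis lessThan_iff of_nat_eq_iff)
  qed
  have fin: "finite (PiE {..<m} (\<lambda>_. UNIV :: 'p mod_ring set))" by (intro finite_PiE) auto
  have sub: "\<phi> ` {..<?N} \<subseteq> PiE {..<m} (\<lambda>_. UNIV :: 'p mod_ring set)" unfolding \<phi>_def by (intro image_subsetI) (simp only: restrict_PiE_iff, simp)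
  have "card (\<phi> ` {..<?N}) = ?N" using card_image[OF inj] by simp
  also have "\<dots> = card (PiE {..<m} (\<lambda>_. UNIV :: 'p mod_ring set))" by (simp add: card_PiE)
  finally have img: "\<phi> ` {..<?N} = PiE {..<m} (\<lambda>_. UNIV :: 'p mod_ring set)"
    using card_subset_eq[OF fin sub] by simp
  have surj: "\<exists>\<alpha><?N. \<forall>i<m. v \<alpha> i = y i" for y
  proof -
    have "restrict y {..<m} \<in> \<phi> ` {..<?N}" using img by auto
    then obtain \<alpha> where "\<alpha> < ?N" "restrict y {..<m} = \<phi> \<alpha>" by auto
    then show ?thesis unfolding \<phi>_def by (intro exI[of _ \<alpha>]) (metis lessThan_iff restrict_apply')
  qed
  have "map_mat red ?W = mat ?N ?N (\<lambda>(\<alpha>, j). \<Prod>i<m. v \<alpha> i ^ (j div CARD('p) ^ i mod CARD('p)))"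
    unfolding v_def by (rule eq_matI) (auto simp: r.hom_prod r.hom_power)
  then have "red (det ?W) \<noteq> 0" using det_nz[of m v, OF surj] by (simp add: r.hom_det[symmetric])
  then show ?thesis by (intro padic_unit red_nz)
qed


end
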